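(* Let $A$ be a finite alphabet and let $L$ be a circular language over $A$ (a set of circular words). The following conditions are equivalent: (1) There exists a $(1,3)$-complete circular splicing system $S=(A,I,R)$, with $I$ a finite set of nonempty circular words, such that $L=L(S)$. (2) There exists a flat splicing system $\mathcal{S}=(A,Y,R')$, where $Y\subseteq A^+$ is a finite language closed under the conjugacy relation and $R'=\{\langle a\mid 1 - 1\mid b\rangle : a,b\in A\}$, such that $L(\mathcal{S})=Lin(L)$. (3) There exists a finite language $Y\subseteq A^+$, closed under the conjugacy relation, such that $Lin(L)=Y^{\leftarrow_*}\setminus\{1\}$.
   Context: $1$ denotes the empty word, $A^+=A^*\setminus\{1\}$. Conjugacy: $xy\sim yx$ for $x,y\in A^*$; a circular word $\sim w$ is the conjugacy class of $w$; for a set $L$ of circular words, $Lin(L)=\{w\in A^*:\ \sim w\in L\}$ (full linearization); for $Y\subseteq A^*$, $\sim Y=\{\sim w: w\in Y\}$. A $(1,3)$-complete system $S=(A,I,R)$: $I$ is a finite set of circular words and the set of rules is $R=\{a\#1\$b\#1 : a,b\in A\}$ (all pairs of letters). Circular splicing with rule $a\#1\$b\#1$: from circular words $\sim xa$ and $\sim yb$ (for some words $x,y$) it produces $\sim xayb$. $L(S)$ is the smallest set of circular words containing $I$ and closed under applying rules of $R$ to any two (not necessarily distinct) of its elements. Flat splicing system $\mathcal{S}=(A,Y,R')$: $Y\subseteq A^*$, $R'$ a finite set of rules $\langle\alpha\mid\beta-\gamma\mid\delta\rangle$ with $\alpha,\beta,\gamma,\delta\in A^*$; applying such a rule to $u=x\alpha\beta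 y$ and $v=\gamma z\delta$ yields $x\alpha\gamma z\delta\beta y$. In particular $\langle a\mid 1-1\mid b\rangle$ applied to $u=xay$ and $v=zb$ yields $xazby$. $L(\mathcal{S})$ is the smallest language containing $Y$ and closed under applying rules of $R'$. Iterated insertion: for $Z,Y\subseteq A^*$, $Z\leftarrow Y=\{z_1yz_2: z_1z_2\in Z, y\in Y\}$; $Y^{\leftarrow_0}=\{1\}$, $Y^{\leftarrow_{i+1}}=Y^{\leftarrow_i}\leftarrow Y$, $Y^{\leftarrow_*}=\bigcup_{i\ge0}Y^{\leftarrow_i}$. *)

theory Defs
  imports Main
begin

(* Words over an alphabet A :: 'a set are lists xs with set xs \<subseteq> A, i.e. xs \<in> lists A.
   The empty word 1 is []. *)

definition conj_word :: "'a list \<Rightarrow> 'a list \<Rightarrow> bool" where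
  "conj_word x y \<longleftrightarrow> (\<exists>u v. x = u @ v \<and> y = v @ u)"

definition circ :: "'a list \<Rightarrow> 'a list set" where
  "circ w = {v. conj_word w v}"

definition Lin :: "'a list set set \<Rightarrow> 'a list set" where
  "Lin L = {w. circ w \<in> L}"

(* language of the (1,3)-complete circular splicing system (A, I, R),
   R = { a#1$b#1 : a,b \<in> A } *)
inductive_set csplice_lang :: "'a set \<Rightarrow> 'a list set set \<Rightarrow> 'a list set set"
  for A :: "'a set" and I :: "'a list set set" where
  init: "c \<in> I \<Longrightarrow> c \<in> csplice_lang A I"
| rule: "\<lbrakk> a \<in> A; b \<in> A; circ (x @ [a]) \<in> csplice_lang A I;
           circ (y @ [b]) \<in> csplice_lang A I \<rbrakk>
         \<Longrightarrow> circ (x @ [a] @ y @ [b]) \<in> csplice_lang A I"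

(* language of a flat splicing system (A, Y, R'); a rule <alpha|beta - gamma|delta>
   is encoded as the tuple (alpha, beta, gamma, delta) *)
inductive_set flat_lang ::
  "'a list set \<Rightarrow> ('a list \<times> 'a list \<times> 'a list \<times> 'a list) set \<Rightarrow> 'a list set"
  for Y :: "'a list set" and R :: "('a list \<times> 'a list \<times> 'a list \<times> 'a list) set" where
  init: "w \<in> Y \<Longrightarrow> w \<in> flat_lang Y R"
| rule: "\<lbrakk> (\<alpha>, \<beta>, \<gamma>, \<delta>) \<in> R; x @ \<alpha> @ \<beta> @ y \<in> flat_lang Y R;
           \<gamma> @ z @ \<delta> \<in> flat_lang Y R \<rbrakk>
         \<Longrightarrow> x @ \<alpha> @ \<gamma> @ z @ \<delta> @ \<beta> @ y \<in> flat_lang Y R"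

definition flat_rules :: "'a set \<Rightarrow> ('a list \<times> 'a list \<times> 'a list \<times> 'a list) set" where
  "flat_rules A = {([a], [], [], [b]) | a b. a \<in> A \<and> b \<in> A}"

definition conj_closed :: "'a list set \<Rightarrow> bool" where
  "conj_closed Y \<longleftrightarrow> (\<forall>w \<in> Y. \<forall>v. conj_word w v \<longrightarrow> v \<in> Y)"

definition insertion :: "'a list set \<Rightarrow> 'a list set \<Rightarrow> 'a list set" where
  "insertion Z Y = {z1 @ y @ z2 | z1 z2 y. z1 @ z2 \<in> Z \<and> y \<in> Y}"

fun ins_pow :: "'a list set \<Rightarrow> nat \<Rightarrow> 'a list set" where
  "ins_pow Y 0 = {[]}"
| "ins_pow Y (Suc n) = insertion (ins_pow Y n) Y"

definition ins_star :: "'a list set \<Rightarrow> 'a list set" where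
  "ins_star Y = (\<Union>n. ins_pow Y n)"

end

theory Submission
  imports Defs
begin

lemma conj_rotate: "conj_word x y \<longleftrightarrow> (\<exists>n. y = rotate n x)"
proof
  assume "conj_word x y"
  then obtain u v where "x = u @ v" "y = v @ u" unfolding conj_word_def by blast
  then show "\<exists>n. y = rotate n x" by (metis rotate_append)
next
  assume "\<exists>n. y = rotate n x"
  then obtain n where "y = rotate n x" by blast
  then show "conj_word x y" unfolding conj_word_def
    by (metis append_take_drop_id rotate_drop_take)
qed

lemma conj_refl: "conj_word x x"
  unfolding conj_word_def by (rule exI[of _ "[]"]) simp

lemma conj_sym: "conj_word x y \<Longrightarrow> conj_word y x"
  unfolding conj_word_def by blast

lemma conj_trans: "conj_word x y \<Longrightarrow> conj_word y z \<Longrightarrow> conj_word x z"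
  unfolding conj_rotate by (metis rotate_rotate)

lemma circ_eq: "circ u = circ v \<longleftrightarrow> conj_word u v"
  unfolding circ_def
  by (auto intro: conj_refl conj_sym conj_trans)

lemma conj_set_len: "conj_word u v \<Longrightarrow> set v = set u \<and> length v = length u"
  unfolding conj_word_def by auto

lemma finite_circ: "finite (circ w)"
proof -
  have "circ w \<subseteq> {xs. set xs \<subseteq> set w \<and> length xs = length w}"
    unfolding circ_def using conj_set_len by fastforce
  then show ?thesis using finite_lists_length_eq[of "set w" "length w"] finite_subset by blast
qed

inductive_set K :: "'a list set \<Rightarrow> 'a list set" for Y where
  base: "w \<in> Y \<Longrightarrow> w \<in> K Y"
| app: "u \<in> K Y \<Longrightarrow> v \<in> K Y \<Longrightarrow> u @ v \<in> K Y"
| rot: "u @ v \<in> K Y \<Longrightarrow> v @ u \<in> K Y"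

lemma K_conj: "w \<in> K Y \<Longrightarrow> conj_word w v \<Longrightarrow> v \<in> K Y"
  unfolding conj_word_def by (auto intro: K.rot)

lemma K_ins: "p @ q \<in> K Y \<Longrightarrow> v \<in> K Y \<Longrightarrow> p @ v @ q \<in> K Y"
proof -
  assume a: "p @ q \<in> K Y" "v \<in> K Y"
  have "q @ p \<in> K Y" using a(1) by (rule K.rot)
  then have "(v @ q) @ p \<in> K Y" using a(2) K.app by fastforce
  then show ?thesis using K.rot by fastforce
qed

lemma K_sub: assumes Y: "Y \<subseteq> lists A - {[]}" and w: "w \<in> K Y" shows "w \<in> lists A - {[]}"
  using w by (induction rule: K.induct) (use Y in auto)

lemma flat_sub: assumes Y: "Y \<subseteq> lists A - {[]}" and w: "w \<in> flat_lang Y (flat_rules A)" shows "w \<in> lists A - {[]}"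
  using w by (induction rule: flat_lang.induct) (use Y in \<open>auto simp: flat_rules_def\<close>)

lemma flat_app:
  assumes "Y \<subseteq> lists A - {[]}" "u \<in> flat_lang Y (flat_rules A)" "v \<in> flat_lang Y (flat_rules A)"
  shows "u @ v \<in> flat_lang Y (flat_rules A)"
proof -
  have u: "u \<in> lists A - {[]}" and v: "v \<in> lists A - {[]}" using flat_sub assms by blast+
  have r: "([last u], [], [], [last v]) \<in> flat_rules A"
    using u v unfolding flat_rules_def by auto
  have "butlast u @ [last u] @ [] @ [] \<in> flat_lang Y (flat_rules A)"
    using u assms(2) by simp
  moreover have "[] @ butlast v @ [last v] \<in> flat_lang Y (flat_rules A)"
    using v assms(3) by simp
  ultimately have "butlast u @ [last u] @ [] @ butlast v @ [last v] @ [] @ [] \<in> flat_lang Y (flat_rules A)"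
    using flat_lang.rule[OF r] by blast
  then have "(butlast u @ [last u]) @ (butlast v @ [last v]) \<in> flat_lang Y (flat_rules A)" by simp
  moreover have "butlast u @ [last u] = u" "butlast v @ [last v] = v" using u v by auto
  ultimately show ?thesis by metis
qed

lemma flat_rot1:
  assumes Y: "Y \<subseteq> lists A - {[]}" "conj_closed Y"
  shows "w \<in> flat_lang Y (flat_rules A) \<Longrightarrow> rotate1 w \<in> flat_lang Y (flat_rules A)"
proof (induction rule: flat_lang.induct)
  case (init w)
  have "conj_word w (rotate1 w)" unfolding conj_rotate by (metis One_nat_def rotate_Suc rotate0 id_apply)
  then show ?case using init Y(2) unfolding conj_closed_def by (blast intro: flat_lang.init)
next
  case (rule \<alpha> \<beta> \<gamma> \<delta> x y z)
  then obtain a b where r: "\<alpha> = [a]" "\<beta> = []" "\<gamma> = []" "\<delta> = [b]" "a \<in> A" "b \<in> A"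
    unfolding flat_rules_def by auto
  show ?case
  proof (cases x)
    case Nil
    have "rotate1 ([a] @ y) \<in> flat_lang Y (flat_rules A)" using rule r Nil by simp
    then have "y @ [a] \<in> flat_lang Y (flat_rules A)" by simp
    from flat_app[OF Y(1) rule(3) this] show ?thesis using r Nil by simp
  next
    case (Cons c x')
    have "rotate1 (x @ [a] @ y) \<in> flat_lang Y (flat_rules A)" using rule r by simp
    then have "x' @ [a] @ [] @ (y @ [c]) \<in> flat_lang Y (flat_rules A)" using Cons by simp
    from flat_lang.rule[OF rule(1) _ rule(3)] this r
    have "x' @ [a] @ [] @ z @ [b] @ [] @ (y @ [c]) \<in> flat_lang Y (flat_rules A)"
      by (metis append_Nil)
    then show ?thesis using r Cons by simp
  qed
qed

lemma flat_rot:
  assumes Y: "Y \<subseteq> lists A - {[]}" "conj_closed Y"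
  shows "w \<in> flat_lang Y (flat_rules A) \<Longrightarrow> rotate n w \<in> flat_lang Y (flat_rules A)"
  by (induction n) (auto intro: flat_rot1[OF Y])

lemma flat_eq_K:
  assumes Y: "Y \<subseteq> lists A - {[]}" "conj_closed Y"
  shows "flat_lang Y (flat_rules A) = K Y"
proof
  show "flat_lang Y (flat_rules A) \<subseteq> K Y"
  proof
    fix w assume "w \<in> flat_lang Y (flat_rules A)"
    then show "w \<in> K Y"
    proof (induction rule: flat_lang.induct)
      case (init w) then show ?case by (rule K.base)
    next
      case (rule \<alpha> \<beta> \<gamma> \<delta> x y z)
      then have "\<beta> = [] \<and> \<gamma> = []" unfolding flat_rules_def by auto
      then show ?case using K_ins[of "x @ \<alpha>" y Y "z @ \<delta>"] rule by simp
    qed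
  qed
next
  show "K Y \<subseteq> flat_lang Y (flat_rules A)"
  proof
    fix w assume "w \<in> K Y"
    then show "w \<in> flat_lang Y (flat_rules A)"
    proof (induction rule: K.induct)
      case (base w) then show ?case by (rule flat_lang.init)
    next
      case (app u v) then show ?case using flat_app[OF Y(1)] by blast
    next
      case (rot u v) then show ?case using flat_rot[OF Y, of "u @ v" "length u"]
        by (simp add: rotate_append)
    qed
  qed
qed

lemma insertion_iff: "w \<in> insertion Z Y \<longleftrightarrow> (\<exists>z1 z2 y. w = z1 @ y @ z2 \<and> z1 @ z2 \<in> Z \<and> y \<in> Y)"
  unfolding insertion_def by blast

lemma insertion_I: "z1 @ z2 \<in> Z \<Longrightarrow> y \<in> Y \<Longrightarrow> z1 @ y @ z2 \<in> insertion Z Y"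
  unfolding insertion_iff by blast

lemma ins_pow_ins:
  "v \<in> ins_pow Y m \<Longrightarrow> p @ q \<in> ins_pow Y n \<Longrightarrow> p @ v @ q \<in> ins_pow Y (n + m)"
proof (induction m arbitrary: v p q)
  case 0 then show ?case by simp
next
  case (Suc m)
  obtain v1 v2 y where v: "v = v1 @ y @ v2" "v1 @ v2 \<in> ins_pow Y m" "y \<in> Y"
    using Suc.prems(1) unfolding ins_pow.simps insertion_iff by blast
  have "(p @ v1) @ (v2 @ q) \<in> ins_pow Y (n + m)" using Suc.IH[OF v(2) Suc.prems(2)] by simp
  then have "(p @ v1) @ y @ (v2 @ q) \<in> ins_pow Y (Suc (n + m))"
    using v(3) unfolding ins_pow.simps by (rule insertion_I)
  then show ?case using v by simp
qed

lemma ins_star_ins: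
  "v \<in> ins_star Y \<Longrightarrow> p @ q \<in> ins_star Y \<Longrightarrow> p @ v @ q \<in> ins_star Y"
proof -
  assume "v \<in> ins_star Y" "p @ q \<in> ins_star Y"
  then obtain m n where "v \<in> ins_pow Y m" "p @ q \<in> ins_pow Y n" unfolding ins_star_def by blast
  then have "p @ v @ q \<in> ins_pow Y (n + m)" by (rule ins_pow_ins)
  then show ?thesis unfolding ins_star_def by blast
qed

lemma ins_pow_K: "w \<in> ins_pow Y n \<Longrightarrow> w \<in> K Y \<or> w = []"
proof (induction n arbitrary: w)
  case 0 then show ?case by simp
next
  case (Suc n)
  obtain z1 z2 y where w: "w = z1 @ y @ z2" "z1 @ z2 \<in> ins_pow Y n" "y \<in> Y"
    using Suc.prems unfolding ins_pow.simps insertion_iff by blast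
  show ?case
  proof (cases "z1 @ z2 = []")
    case True then show ?thesis using w by (auto intro: K.base)
  next
    case False then have "z1 @ z2 \<in> K Y" using Suc.IH w by blast
    then show ?thesis using K_ins[OF _ K.base[OF w(3)]] w by blast
  qed
qed

lemma ins_star_eq_K:
  assumes Y: "Y \<subseteq> lists A - {[]}" "conj_closed Y"
  shows "ins_star Y - {[]} = K Y"
proof
  show "ins_star Y - {[]} \<subseteq> K Y" unfolding ins_star_def using ins_pow_K by blast
next
  have "flat_lang Y (flat_rules A) \<subseteq> ins_star Y"
  proof
    fix w assume "w \<in> flat_lang Y (flat_rules A)"
    then show "w \<in> ins_star Y"
    proof (induction rule: flat_lang.induct)
      case (init w)
      have "[] @ w @ [] \<in> insertion {[]} Y" using init by (intro insertion_I) auto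
      then have "w \<in> ins_pow Y (Suc 0)" by simp
      then show ?case unfolding ins_star_def by blast
    next
      case (rule \<alpha> \<beta> \<gamma> \<delta> x y z)
      then have "\<beta> = [] \<and> \<gamma> = []" unfolding flat_rules_def by auto
      then show ?case using ins_star_ins[of "z @ \<delta>" Y "x @ \<alpha>" y] rule by simp
    qed
  qed
  moreover have "K Y \<subseteq> lists A - {[]}" using K_sub[OF Y(1)] by blast
  ultimately show "K Y \<subseteq> ins_star Y - {[]}" using flat_eq_K[OF Y] by blast
qed

lemma Lin_circ_K: "Lin (circ ` K Y) = K Y"
proof
  show "Lin (circ ` K Y) \<subseteq> K Y"
  proof
    fix w assume "w \<in> Lin (circ ` K Y)"
    then obtain s where "circ w = circ s" "s \<in> K Y" unfolding Lin_def by auto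
    then show "w \<in> K Y" using K_conj conj_sym circ_eq by metis
  qed
qed (auto simp: Lin_def)

lemma circ_in_K: "circ w \<in> circ ` K Y \<Longrightarrow> w \<in> K Y"
proof -
  assume "circ w \<in> circ ` K Y"
  then have "w \<in> Lin (circ ` K Y)" unfolding Lin_def by simp
  then show ?thesis using Lin_circ_K by blast
qed

lemma csplice_eq:
  assumes Y: "Y \<subseteq> lists A - {[]}"
  shows "csplice_lang A (circ ` Y) = circ ` K Y"
proof
  show "csplice_lang A (circ ` Y) \<subseteq> circ ` K Y"
  proof
    fix c assume "c \<in> csplice_lang A (circ ` Y)"
    then show "c \<in> circ ` K Y"
    proof (induction rule: csplice_lang.induct)
      case (init c) then show ?case by (auto intro: K.base)
    next
      case (rule a b x y)
      have "x @ [a] \<in> K Y" by (rule circ_in_K) (rule rule.IH(1))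
      moreover have "y @ [b] \<in> K Y" by (rule circ_in_K) (rule rule.IH(2))
      ultimately have "(x @ [a]) @ (y @ [b]) \<in> K Y" by (rule K.app)
      then show ?case by (metis append.assoc image_eqI)
    qed
  qed
next
  show "circ ` K Y \<subseteq> csplice_lang A (circ ` Y)"
  proof
    fix c assume "c \<in> circ ` K Y"
    then obtain w where c: "c = circ w" "w \<in> K Y" by blast
    have "circ w \<in> csplice_lang A (circ ` Y)" using c(2)
    proof (induction rule: K.induct)
      case (base w) then show ?case by (auto intro: csplice_lang.init)
    next
      case (app u v)
      have u: "u \<in> lists A - {[]}" and v: "v \<in> lists A - {[]}" using K_sub[OF Y] app by blast+
      then have "last u \<in> A" "last v \<in> A" by auto
      have "circ (butlast u @ [last u] @ butlast v @ [last v]) \<in> csplice_lang A (circ ` Y)"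
        by (rule csplice_lang.rule[OF \<open>last u \<in> A\<close> \<open>last v \<in> A\<close>])
           (use app u v in \<open>simp_all add: append_butlast_last_id\<close>)
      moreover have "butlast u @ [last u] @ butlast v @ [last v] = u @ v"
        using u v by (metis Diff_iff append.assoc append_butlast_last_id insertCI)
      ultimately show ?case by simp
    next
      case (rot u v)
      have "circ (v @ u) = circ (u @ v)" unfolding circ_eq conj_word_def by blast
      then show ?case using rot.IH by simp
    qed
    then show "c \<in> csplice_lang A (circ ` Y)" using c by simp
  qed
qed

lemma L_eq: "L \<subseteq> range circ \<Longrightarrow> L = circ ` Lin L"
  unfolding Lin_def by auto

definition Cond where
  "Cond A L \<longleftrightarrow> (\<exists>Y. finite Y \<and> Y \<subseteq> lists A - {[]} \<and> conj_closed Y \<and> Lin L = K Y)"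

lemma c1:
  assumes "L \<subseteq> circ ` lists A"
  shows "(\<exists>I. finite I \<and> I \<subseteq> circ ` (lists A - {[]}) \<and> L = csplice_lang A I) \<longleftrightarrow> Cond A L"
proof
  assume "\<exists>I. finite I \<and> I \<subseteq> circ ` (lists A - {[]}) \<and> L = csplice_lang A I"
  then obtain I where I: "finite I" "I \<subseteq> circ ` (lists A - {[]})" "L = csplice_lang A I" by blast
  define Y where "Y = Lin I"
  have Ymem: "w \<in> Y \<longleftrightarrow> circ w \<in> I" for w unfolding Y_def Lin_def by simp
  have IY: "I = circ ` Y"
  proof
    show "I \<subseteq> circ ` Y"
    proof
      fix c assume c: "c \<in> I"
      then obtain w0 where "c = circ w0" using I(2) by blast
      then show "c \<in> circ ` Y" using c Ymem by blast
    qed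
  next
    show "circ ` Y \<subseteq> I" using Ymem by blast
  qed
  have "Y \<subseteq> \<Union> I"
  proof
    fix w assume "w \<in> Y"
    then have "circ w \<in> I" using Ymem by blast
    moreover have "w \<in> circ w" unfolding circ_def using conj_refl by simp
    ultimately show "w \<in> \<Union> I" by blast
  qed
  moreover have "finite (\<Union> I)"
  proof (rule finite_Union[OF I(1)])
    fix c assume "c \<in> I"
    then obtain w0 where "c = circ w0" using I(2) by blast
    then show "finite c" using finite_circ by simp
  qed
  ultimately have fY: "finite Y" by (rule finite_subset)
  have sY: "Y \<subseteq> lists A - {[]}"
  proof
    fix w assume "w \<in> Y"
    then have "circ w \<in> I" using Ymem by blast
    then have "circ w \<in> circ ` (lists A - {[]})" using I(2) by blast
    then obtain w0 where w0: "circ w = circ w0" "w0 \<in> lists A - {[]}" by blast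
    then have "conj_word w w0" using circ_eq by blast
    then have "set w0 = set w" "length w0 = length w" using conj_set_len by blast+
    then show "w \<in> lists A - {[]}" using w0(2) by (auto simp: in_lists_conv_set)
  qed
  have cY: "conj_closed Y" unfolding conj_closed_def
  proof (intro ballI allI impI)
    fix w v assume "w \<in> Y" "conj_word w v"
    then have "circ v = circ w" using circ_eq conj_sym by blast
    then show "v \<in> Y" using \<open>w \<in> Y\<close> Ymem by simp
  qed
  have "L = circ ` K Y" using I(3) IY csplice_eq[OF sY] by simp
  then have "Lin L = K Y" using Lin_circ_K by simp
  then show "Cond A L" unfolding Cond_def using fY sY cY by blast
next
  assume "Cond A L"
  then obtain Y where Y: "finite Y" "Y \<subseteq> lists A - {[]}" "conj_closed Y" "Lin L = K Y"
    unfolding Cond_def by blast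
  have "L \<subseteq> range circ" using assms by blast
  then have "L = circ ` Lin L" by (rule L_eq)
  then have "L = circ ` K Y" using Y(4) by simp
  then have "L = csplice_lang A (circ ` Y)" using csplice_eq[OF Y(2)] by simp
  moreover have "circ ` Y \<subseteq> circ ` (lists A - {[]})" using Y(2) by blast
  moreover have "finite (circ ` Y)" using Y(1) by simp
  ultimately show "\<exists>I. finite I \<and> I \<subseteq> circ ` (lists A - {[]}) \<and> L = csplice_lang A I"
    by blast
qed

lemma c2: "(\<exists>Y. finite Y \<and> Y \<subseteq> lists A - {[]} \<and> conj_closed Y
                   \<and> flat_lang Y (flat_rules A) = Lin L) \<longleftrightarrow> Cond A L"
proof
  assume "\<exists>Y. finite Y \<and> Y \<subseteq> lists A - {[]} \<and> conj_closed Y \<and> flat_lang Y (flat_rules A) = Lin L"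
  then obtain Y where Y: "finite Y" "Y \<subseteq> lists A - {[]}" "conj_closed Y" "flat_lang Y (flat_rules A) = Lin L"
    by blast
  then have "Lin L = K Y" using flat_eq_K[OF Y(2,3)] by simp
  then show "Cond A L" unfolding Cond_def using Y by blast
next
  assume "Cond A L"
  then obtain Y where Y: "finite Y" "Y \<subseteq> lists A - {[]}" "conj_closed Y" "Lin L = K Y"
    unfolding Cond_def by blast
  then have "flat_lang Y (flat_rules A) = Lin L" using flat_eq_K[OF Y(2,3)] by simp
  then show "\<exists>Y. finite Y \<and> Y \<subseteq> lists A - {[]} \<and> conj_closed Y \<and> flat_lang Y (flat_rules A) = Lin L"
    using Y by blast
qed

lemma c3: "(\<exists>Y. finite Y \<and> Y \<subseteq> lists A - {[]} \<and> conj_closed Y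
                   \<and> Lin L = ins_star Y - {[]}) \<longleftrightarrow> Cond A L"
proof
  assume "\<exists>Y. finite Y \<and> Y \<subseteq> lists A - {[]} \<and> conj_closed Y \<and> Lin L = ins_star Y - {[]}"
  then obtain Y where Y: "finite Y" "Y \<subseteq> lists A - {[]}" "conj_closed Y" "Lin L = ins_star Y - {[]}"
    by blast
  then have "Lin L = K Y" using ins_star_eq_K[OF Y(2,3)] by simp
  then show "Cond A L" unfolding Cond_def using Y by blast
next
  assume "Cond A L"
  then obtain Y where Y: "finite Y" "Y \<subseteq> lists A - {[]}" "conj_closed Y" "Lin L = K Y"
    unfolding Cond_def by blast
  then have "Lin L = ins_star Y - {[]}" using ins_star_eq_K[OF Y(2,3)] by simp
  then show "\<exists>Y. finite Y \<and> Y \<subseteq> lists A - {[]} \<and> conj_closed Y \<and> Lin L = ins_star Y - {[]}"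
    using Y by blast
qed

theorem theorem11p6:
  fixes A :: "'a set" and L :: "'a list set set"
  assumes "finite A"
    and "L \<subseteq> circ ` lists A"
  shows "((\<exists>I. finite I \<and> I \<subseteq> circ ` (lists A - {[]}) \<and> L = csplice_lang A I)
          \<longleftrightarrow> (\<exists>Y. finite Y \<and> Y \<subseteq> lists A - {[]} \<and> conj_closed Y
                   \<and> flat_lang Y (flat_rules A) = Lin L))
       \<and> ((\<exists>Y. finite Y \<and> Y \<subseteq> lists A - {[]} \<and> conj_closed Y
                   \<and> flat_lang Y (flat_rules A) = Lin L)
          \<longleftrightarrow> (\<exists>Y. finite Y \<and> Y \<subseteq> lists A - {[]} \<and> conj_closed Y
                   \<and> Lin L = ins_star Y - {[]}))"
  using c1[OF assms(2)] c2[of A L] c3[of A L] by blast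

end
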